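(* Let $n\ge 1$ and $r\ge 1$ be integers. If $n\ge 2r$, then the pendant complete graph $K_n^*$ is $r$-EKR. If $n>2r$, then $K_n^*$ is strictly $r$-EKR.
   Context: All graphs are finite and simple. An independent $r$-set of a graph $G$ is a set of $r$ pairwise non-adjacent vertices; $\mathcal{I}^{(r)}(G)$ denotes the family of all independent $r$-sets of $G$, and for $v\in V(G)$, $\mathcal{I}^{(r)}_v(G)$ denotes the subfamily of those containing $v$ (the $r$-star with centre $v$). A family $\mathcal{A}\subseteq \mathcal{I}^{(r)}(G)$ is intersecting if every two members of $\mathcal{A}$ have nonempty intersection. $G$ is $r$-EKR if some $r$-star $\mathcal{I}^{(r)}_v(G)$ has size equal to the maximum size of an intersecting subfamily of $\mathcal{I}^{(r)}(G)$; $G$ is strictly $r$-EKR if moreover every intersecting subfamily of $\mathcal{I}^{(r)}(G)$ of maximum size is an $r$-star. For a graph $G$ with vertices $x_1,\dots,x_n$, the pendant graph $G^*$ has vertex set $\{x_1,\dots,x_n\}\sqcup\{p_1,\dots,p_n\}$ and edge set $E(G)\sqcup\{x_1p_1,\dots,x_np_n\}$. $K_n^*$ is the pendant graph of the complete graph $K_n$. *)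

theory Defs
  imports Main
begin

text \<open>A finite simple graph is given by a vertex set V and a symmetric irreflexive
adjacency relation E (only its restriction to V matters).\<close>

definition indep_rsets :: "'a set \<Rightarrow> ('a \<Rightarrow> 'a \<Rightarrow> bool) \<Rightarrow> nat \<Rightarrow> 'a set set" where
  "indep_rsets V E r = {A. A \<subseteq> V \<and> finite A \<and> card A = r \<and> (\<forall>x\<in>A. \<forall>y\<in>A. \<not> E x y)}"

definition indep_star :: "'a set \<Rightarrow> ('a \<Rightarrow> 'a \<Rightarrow> bool) \<Rightarrow> nat \<Rightarrow> 'a \<Rightarrow> 'a set set" where
  "indep_star V E r v = {A \<in> indep_rsets V E r. v \<in> A}"

definition intersecting :: "'a set set \<Rightarrow> bool" where
  "intersecting F \<longleftrightarrow> (\<forall>A\<in>F. \<forall>B\<in>F. A \<inter> B \<noteq> {})"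

definition max_intersecting :: "'a set \<Rightarrow> ('a \<Rightarrow> 'a \<Rightarrow> bool) \<Rightarrow> nat \<Rightarrow> nat" where
  "max_intersecting V E r =
     Max {card F | F. F \<subseteq> indep_rsets V E r \<and> intersecting F}"

definition r_EKR :: "'a set \<Rightarrow> ('a \<Rightarrow> 'a \<Rightarrow> bool) \<Rightarrow> nat \<Rightarrow> bool" where
  "r_EKR V E r \<longleftrightarrow> (\<exists>v\<in>V. card (indep_star V E r v) = max_intersecting V E r)"

definition strictly_r_EKR :: "'a set \<Rightarrow> ('a \<Rightarrow> 'a \<Rightarrow> bool) \<Rightarrow> nat \<Rightarrow> bool" where
  "strictly_r_EKR V E r \<longleftrightarrow> r_EKR V E r \<and>
     (\<forall>F. F \<subseteq> indep_rsets V E r \<and> intersecting F \<and> card F = max_intersecting V E r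
          \<longrightarrow> (\<exists>v\<in>V. F = indep_star V E r v))"

text \<open>Pendant graph: vertex x_i is Inl x, pendant vertex p_i is Inr x.\<close>

definition pendant_V :: "'a set \<Rightarrow> ('a + 'a) set" where
  "pendant_V V = Inl ` V \<union> Inr ` V"

fun pendant_E :: "('a \<Rightarrow> 'a \<Rightarrow> bool) \<Rightarrow> 'a + 'a \<Rightarrow> 'a + 'a \<Rightarrow> bool" where
  "pendant_E E (Inl x) (Inl y) = E x y"
| "pendant_E E (Inl x) (Inr y) = (x = y)"
| "pendant_E E (Inr x) (Inl y) = (x = y)"
| "pendant_E E (Inr x) (Inr y) = False"

definition K_V :: "nat \<Rightarrow> nat set" where "K_V n = {..<n}"
definition K_E :: "nat \<Rightarrow> nat \<Rightarrow> bool" where "K_E x y \<longleftrightarrow> x \<noteq> y"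

end

theory Submission
  imports Defs "HOL-Combinatorics.Permutations"
begin

definition dst :: "nat \<Rightarrow> nat \<Rightarrow> nat \<Rightarrow> nat" where
  "dst n s p = (if s \<le> p then p - s else p + n - s)"

lemma dst_lt: "s < n \<Longrightarrow> p < n \<Longrightarrow> dst n s p < n"
  by (auto simp: dst_def)
lemma dst_self[simp]: "dst n s s = 0"
  by (auto simp: dst_def)
lemma dst_sym: "s < n \<Longrightarrow> t < n \<Longrightarrow> s \<noteq> t \<Longrightarrow> dst n s t + dst n t s = n"
  by (auto simp: dst_def)
lemma dst_add: "s < n \<Longrightarrow> t < n \<Longrightarrow> u < n \<Longrightarrow> dst n s t \<le> dst n s u \<Longrightarrow> dst n t u = dst n s u - dst n s t"
  by (auto simp: dst_def split: if_splits)
lemma dst_inj: "s < n \<Longrightarrow> t < n \<Longrightarrow> u < n \<Longrightarrow> dst n s t = dst n s u \<Longrightarrow> t = u"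
  by (auto simp: dst_def split: if_splits)
lemma dst_zero: "s < n \<Longrightarrow> t < n \<Longrightarrow> dst n s t = 0 \<Longrightarrow> s = t"
  by (auto simp: dst_def split: if_splits)

lemma common_pt: "s < n \<Longrightarrow> t < n \<Longrightarrow> p < n \<Longrightarrow> dst n s p < k \<Longrightarrow> dst n t p < k \<Longrightarrow> dst n s t < k \<or> dst n t s < k"
  by (auto simp: dst_def split: if_splits)

lemma katona:
  assumes k: "1 \<le> k" "2*k \<le> n" and W: "W \<subseteq> {..<n}"
    and int: "\<forall>s\<in>W. \<forall>t\<in>W. dst n s t < k \<or> dst n t s < k"
  shows "card W \<le> k"
proof (cases "W = {}")
  case True then show ?thesis by simp
next
  case False
  then obtain s0 where s0: "s0 \<in> W" by blast
  define g where "g t = (if dst n s0 t < k then dst n s0 t else dst n s0 t + k - n)" for t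
  have fin: "finite W" using W finite_subset by blast
  have sn: "s0 < n" using s0 W by auto
  have gk: "g t < k" if "t \<in> W" for t
  proof -
    have tn: "t < n" using that W by auto
    show ?thesis
    proof (cases "dst n s0 t < k")
      case True then show ?thesis by (simp add: g_def)
    next
      case False
      then have "dst n t s0 < k" using int s0 that by blast
      moreover have "s0 \<noteq> t" using False k by auto
      ultimately show ?thesis using dst_sym[OF sn tn] dst_lt[OF sn tn] False by (simp add: g_def)
    qed
  qed
  have big: "n < dst n s0 t + k" if "t \<in> W" "\<not> dst n s0 t < k" for t
  proof -
    have tn: "t < n" using that W by auto
    have "dst n t s0 < k" using int s0 that by blast
    moreover have "s0 \<noteq> t" using that k by auto
    ultimately show ?thesis using dst_sym[OF sn tn] by simp
  qed
  have inj: "inj_on g W"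
  proof (rule inj_onI)
    fix t t' assume t: "t \<in> W" and t': "t' \<in> W" and eq: "g t = g t'"
    have tn: "t < n" and tn': "t' < n" using t t' W by auto
    show "t = t'"
    proof (rule ccontr)
      assume ne: "t \<noteq> t'"
      have lt1: "dst n s0 t < n" "dst n s0 t' < n" using dst_lt sn tn tn' by auto
      consider "dst n s0 t < k" "dst n s0 t' < k" | "\<not> dst n s0 t < k" "\<not> dst n s0 t' < k"
        | "dst n s0 t < k" "\<not> dst n s0 t' < k" | "\<not> dst n s0 t < k" "dst n s0 t' < k" by blast
      then show False
      proof cases
        case 1 then show False using eq ne dst_inj[OF sn tn tn'] by (simp add: g_def)
      next
        case 2 then show False using eq ne dst_inj[OF sn tn tn'] big[OF t] big[OF t'] by (simp add: g_def) linarith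
      next
        case 3
        then have d: "dst n s0 t' = dst n s0 t + n - k" using eq lt1 k big[OF t'] by (simp add: g_def)
        have a: "dst n t t' = n - k" using dst_add[OF sn tn tn'] d k 3 by simp
        have b: "dst n t' t = k" using dst_sym[OF tn tn' ne] a k by simp
        have "dst n t t' < k \<or> dst n t' t < k" using int t t' by blast
        then show False using a b k by linarith
      next
        case 4
        then have d: "dst n s0 t = dst n s0 t' + n - k" using eq lt1 k big[OF t] by (simp add: g_def)
        have a: "dst n t' t = n - k" using dst_add[OF sn tn' tn] d k 4 by simp
        have b: "dst n t t' = k" using dst_sym[OF tn' tn] ne a k by simp
        have "dst n t t' < k \<or> dst n t' t < k" using int t t' by blast
        then show False using a b k by linarith
      qed
    qed
  qed
  have "g ` W \<subseteq> {..<k}" using gk by auto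
  then have "card (g ` W) \<le> k" using card_mono[of "{..<k}"] by fastforce
  then show ?thesis using card_image[OF inj] by simp
qed

lemma katona_uniq:
  assumes k: "1 \<le> k" "2*k < n" and W: "W \<subseteq> {..<n}"
    and int: "\<forall>s\<in>W. \<forall>t\<in>W. dst n s t < k \<or> dst n t s < k"
    and cW: "card W = k"
  shows "\<exists>p<n. W = {s. s < n \<and> dst n s p < k}"
proof -
  have fin: "finite W" using W finite_subset by blast
  have "W \<noteq> {}" using cW k by auto
  then obtain s0 where s0: "s0 \<in> W" by blast
  have sn: "s0 < n" using s0 W by auto
  define g where "g t = (if dst n s0 t < k then dst n s0 t else dst n s0 t + k - n)" for t
  have big: "n < dst n s0 t + k" if "t \<in> W" "\<not> dst n s0 t < k" for t
  proof -
    have tn: "t < n" using that W by auto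
    have "dst n t s0 < k" using int s0 that by blast
    moreover have "s0 \<noteq> t" using that k by auto
    ultimately show ?thesis using dst_sym[OF sn tn] by simp
  qed
  have gk: "g t < k" if "t \<in> W" for t
  proof -
    have tn: "t < n" using that W by auto
    show ?thesis using big[OF that] dst_lt[OF sn tn] by (simp add: g_def) linarith
  qed
  have inj: "inj_on g W"
  proof (rule inj_onI)
    fix t t' assume t: "t \<in> W" and t': "t' \<in> W" and eq: "g t = g t'"
    have tn: "t < n" and tn': "t' < n" using t t' W by auto
    show "t = t'"
    proof (rule ccontr)
      assume ne: "t \<noteq> t'"
      have lt1: "dst n s0 t < n" "dst n s0 t' < n" using dst_lt sn tn tn' by auto
      consider "dst n s0 t < k" "dst n s0 t' < k" | "\<not> dst n s0 t < k" "\<not> dst n s0 t' < k"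
        | "dst n s0 t < k" "\<not> dst n s0 t' < k" | "\<not> dst n s0 t < k" "dst n s0 t' < k" by blast
      then show False
      proof cases
        case 1 then show False using eq ne dst_inj[OF sn tn tn'] by (simp add: g_def)
      next
        case 2 then show False using eq ne dst_inj[OF sn tn tn'] big[OF t] big[OF t'] by (simp add: g_def) linarith
      next
        case 3
        then have d: "dst n s0 t' = dst n s0 t + n - k" using eq lt1 k big[OF t'] by (simp add: g_def)
        have a: "dst n t t' = n - k" using dst_add[OF sn tn tn'] d k 3 by simp
        have b: "dst n t' t = k" using dst_sym[OF tn tn' ne] a k by simp
        have "dst n t t' < k \<or> dst n t' t < k" using int t t' by blast
        then show False using a b k by linarith
      next
        case 4
        then have d: "dst n s0 t = dst n s0 t' + n - k" using eq lt1 k big[OF t] by (simp add: g_def)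
        have a: "dst n t' t = n - k" using dst_add[OF sn tn' tn] d k 4 by simp
        have b: "dst n t t' = k" using dst_sym[OF tn' tn] ne a k by simp
        have "dst n t t' < k \<or> dst n t' t < k" using int t t' by blast
        then show False using a b k by linarith
      qed
    qed
  qed
  have gW: "g ` W = {..<k}"
  proof -
    have "g ` W \<subseteq> {..<k}" using gk by auto
    moreover have "card (g ` W) = k" using card_image[OF inj] cW by simp
    ultimately show ?thesis by (simp add: card_subset_eq)
  qed
  define P where "P = {j. 1 \<le> j \<and> j < k \<and> (\<exists>t\<in>W. dst n s0 t = j)}"
  have clos: "j - 1 \<in> P" if jP: "j \<in> P" and j2: "2 \<le> j" for j
  proof -
    obtain t where t: "t \<in> W" "dst n s0 t = j" using jP by (auto simp: P_def)
    have jk: "j < k" using jP by (auto simp: P_def)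
    have "j - 1 \<in> g ` W" using gW jk by auto
    then obtain t' where t': "t' \<in> W" "g t' = j - 1" by auto
    have tn: "t < n" and tn': "t' < n" using t t' W by auto
    show ?thesis
    proof (cases "dst n s0 t' < k")
      case True then show ?thesis using t' j2 jk by (auto simp: P_def g_def)
    next
      case False
      have d: "dst n s0 t' = j - 1 + n - k" using False t'(2) big[OF t'(1) False] by (simp add: g_def)
      have ne: "t \<noteq> t'" using d t(2) k jk j2 by auto
      have a: "dst n t t' = n - k - 1" using dst_add[OF sn tn tn'] d t(2) k jk j2 by simp
      have b: "dst n t' t = k + 1" using dst_sym[OF tn tn' ne] a k by simp
      have "dst n t t' < k \<or> dst n t' t < k" using int t t' by blast
      then show ?thesis using a b k by linarith
    qed
  qed
  have down: "j \<in> P" if "j + d \<in> P" "1 \<le> j" for j d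
    using that
  proof (induction d arbitrary: j)
    case 0 then show ?case by simp
  next
    case (Suc d)
    have "j + Suc d - 1 \<in> P" using clos[OF Suc.prems(1)] Suc.prems(2) by simp
    then have "j + d \<in> P" by simp
    then show ?case using Suc.IH Suc.prems(2) by blast
  qed
  have finP: "finite P" unfolding P_def by (rule finite_subset[of _ "{..<k}"]) auto
  define \<tau> where "\<tau> = Max (insert 0 P)"
  have tauk: "\<tau> < k" unfolding \<tau>_def using finP k by (subst Max_less_iff) (auto simp: P_def)
  have leP: "j \<le> \<tau>" if "j \<in> P" for j unfolding \<tau>_def using finP that by simp
  have inP: "j \<in> P" if "1 \<le> j" "j \<le> \<tau>" for j
  proof -
    have "\<tau> \<in> insert 0 P" unfolding \<tau>_def using finP by (intro Max_in) auto
    then have "\<tau> \<in> P" using that by auto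
    then have "j + (\<tau> - j) \<in> P" using that by simp
    then show ?thesis using down that by blast
  qed
  define p where "p = (if s0 + \<tau> < n then s0 + \<tau> else s0 + \<tau> - n)"
  have pn: "p < n" using sn tauk k by (auto simp: p_def)
  have dp: "dst n s0 p = \<tau>" using sn tauk k by (auto simp: p_def dst_def)
  have sub: "W \<subseteq> {s. s < n \<and> dst n s p < k}"
  proof
    fix t assume t: "t \<in> W"
    have tn: "t < n" using t W by auto
    have "dst n t p < k"
    proof (cases "dst n s0 t < k")
      case True
      show ?thesis
      proof (cases "dst n s0 t = 0")
        case True
        then have "t = s0" using dst_zero[OF sn tn] by simp
        then show ?thesis using dp tauk by simp
      next
        case False
        then have "dst n s0 t \<in> P" using True t by (auto simp: P_def)
        then have "dst n s0 t \<le> \<tau>" using leP by blast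
        then show ?thesis using dst_add[OF sn tn pn] dp tauk by simp
      qed
    next
      case False
      define j where "j = dst n s0 t + k - n"
      have j1: "1 \<le> j" using big[OF t False] dst_lt[OF sn tn] k by (simp add: j_def) 
      have jk: "j < k" using dst_lt[OF sn tn] j_def k by arith
      have d: "dst n s0 t = j + n - k" using big[OF t False] j_def by simp
      have "j \<notin> P"
      proof
        assume "j \<in> P"
        then obtain t'' where t'': "t'' \<in> W" "dst n s0 t'' = j" by (auto simp: P_def)
        have "g t'' = j" using t'' jk by (simp add: g_def)
        moreover have "g t = j" using False by (simp add: g_def j_def)
        ultimately have "t'' = t" using inj t t'' by (auto dest: inj_onD)
        then show False using t'' d k jk by simp
      qed
      then have jt: "\<tau> < j" using inP j1 by (meson not_le)
      have ne: "p \<noteq> t" using dp d jt jk k by auto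
      have "dst n p t = dst n s0 t - \<tau>" using dst_add[OF sn pn tn] dp d jt jk k by simp
      then have "dst n t p = n - (dst n s0 t - \<tau>)" using dst_sym[OF pn tn ne] by simp
      then show ?thesis using d jt jk tauk by simp
    qed
    then show "t \<in> {s. s < n \<and> dst n s p < k}" using tn by simp
  qed
  have "card {s. s < n \<and> dst n s p < k} \<le> k"
    apply (rule katona[of k n]) using k pn common_pt[of _ n _ p k] by auto
  then have "W = {s. s < n \<and> dst n s p < k}"
    using sub cW by (intro card_seteq) (auto intro: finite_subset[of _ "{..<n}"])
  then show ?thesis using pn by blast
qed


definition iv :: "nat \<Rightarrow> nat \<Rightarrow> nat \<Rightarrow> nat set" where
  "iv n k s = {p. p < n \<and> dst n s p < k}"

definition cyc :: "nat \<Rightarrow> nat list set" where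
  "cyc n = {xs. distinct xs \<and> set xs = {..<n}}"

definition arc :: "nat list \<Rightarrow> nat \<Rightarrow> nat \<Rightarrow> nat set" where
  "arc xs k s = (\<lambda>p. xs ! p) ` iv (length xs) k s"

lemma cyc_len: "xs \<in> cyc n \<Longrightarrow> length xs = n"
  unfolding cyc_def using distinct_card by fastforce

lemma finite_cyc: "finite (cyc n)"
proof -
  have "cyc n \<subseteq> {xs. set xs \<subseteq> {..<n} \<and> length xs = n}" using cyc_len by (auto simp: cyc_def)
  then show ?thesis using finite_lists_length_eq[of "{..<n}" n] finite_subset by blast
qed

lemma upt_cyc: "[0..<n] \<in> cyc n" by (auto simp: cyc_def)

lemma iv_sub: "iv n k s \<subseteq> {..<n}" by (auto simp: iv_def)

lemma card_iv: assumes "k \<le> n" "s < n" shows "card (iv n k s) = k"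
proof -
  define f where "f i = (if s + i < n then s + i else s + i - n)" for i
  have "bij_betw f {..<k} (iv n k s)"
  proof (rule bij_betw_imageI)
    show "inj_on f {..<k}" using assms by (auto simp: f_def inj_on_def split: if_splits)
    show "f ` {..<k} = iv n k s"
    proof
      show "f ` {..<k} \<subseteq> iv n k s" using assms by (auto simp: f_def iv_def dst_def)
      show "iv n k s \<subseteq> f ` {..<k}"
      proof
        fix p assume "p \<in> iv n k s"
        then have p: "p < n" "dst n s p < k" by (auto simp: iv_def)
        have "f (dst n s p) = p" using p assms by (auto simp: f_def dst_def)
        then show "p \<in> f ` {..<k}" using p by force
      qed
    qed
  qed
  then show ?thesis by (metis bij_betw_same_card card_lessThan)
qed

lemma card_ends: assumes "k \<le> n" "q < n" shows "k \<le> card {s. s < n \<and> dst n s q < k}"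
proof -
  define f where "f i = (if i \<le> q then q - i else q + n - i)" for i
  have "inj_on f {..<k}" using assms by (auto simp: f_def inj_on_def split: if_splits)
  moreover have "f ` {..<k} \<subseteq> {s. s < n \<and> dst n s q < k}"
    using assms by (auto simp: f_def dst_def)
  ultimately show ?thesis using card_inj_on_le[of f "{..<k}"] by fastforce
qed

lemma nth_inj: "xs \<in> cyc n \<Longrightarrow> p < n \<Longrightarrow> q < n \<Longrightarrow> xs ! p = xs ! q \<longleftrightarrow> p = q"
  using cyc_len[of xs n] by (auto simp: cyc_def nth_eq_iff_index_eq)

lemma nth_in: "xs \<in> cyc n \<Longrightarrow> p < n \<Longrightarrow> xs ! p < n"
  using cyc_len[of xs n] nth_mem[of p xs] by (auto simp: cyc_def)

lemma pos_ex: "xs \<in> cyc n \<Longrightarrow> c < n \<Longrightarrow> \<exists>q<n. xs ! q = c"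
  using cyc_len[of xs n] by (auto simp: cyc_def in_set_conv_nth)

lemma arc_sub: "xs \<in> cyc n \<Longrightarrow> arc xs k s \<subseteq> {..<n}"
  using cyc_len[of xs n] nth_in[of xs n] by (auto simp: arc_def iv_def)

lemma in_arc: "xs \<in> cyc n \<Longrightarrow> q < n \<Longrightarrow> xs ! q \<in> arc xs k s \<longleftrightarrow> dst n s q < k"
  using cyc_len[of xs n] nth_inj[of xs n] by (auto simp: arc_def iv_def)

lemma card_arc: "xs \<in> cyc n \<Longrightarrow> k \<le> n \<Longrightarrow> s < n \<Longrightarrow> card (arc xs k s) = k"
  unfolding arc_def using cyc_len[of xs n] card_iv[of k n s] nth_inj[of xs n]
  by (subst card_image) (auto simp: inj_on_def iv_def)

lemma arc_inter: assumes "xs \<in> cyc n" "s < n" "t < n" "arc xs k s \<inter> arc xs k t \<noteq> {}"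
  shows "dst n s t < k \<or> dst n t s < k"
proof -
  obtain c where "c \<in> arc xs k s" "c \<in> arc xs k t" using assms(4) by blast
  then obtain p p' where p: "p < n" "dst n s p < k" "p' < n" "dst n t p' < k" "xs ! p = xs ! p'"
    using cyc_len[OF assms(1)] by (auto simp: arc_def iv_def)
  then have "p = p'" using nth_inj[OF assms(1)] by blast
  then have p: "p < n" "dst n s p < k" "dst n t p < k" using p by auto
  show ?thesis by (rule common_pt[OF assms(2,3) p])
qed

lemma arc_inj: assumes "xs \<in> cyc n" "s < n" "t < n" "2*k \<le> n" "1 \<le> k" "arc xs k s = arc xs k t"
  shows "s = t"
proof (rule ccontr)
  assume ne: "s \<noteq> t"
  have "xs ! s \<in> arc xs k s" using in_arc[OF assms(1,2), of k s] assms by simp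
  then have "dst n t s < k" using in_arc[OF assms(1,2), of k t] assms(6) by simp
  moreover have "xs ! t \<in> arc xs k t" using in_arc[OF assms(1,3), of k t] assms by simp
  then have "dst n s t < k" using in_arc[OF assms(1,3), of k s] assms(6) by simp
  ultimately show False using dst_sym[OF assms(2,3) ne] assms(4) by simp
qed

lemma arc_map: "xs \<in> cyc n \<Longrightarrow> arc (map \<pi> xs) k s = \<pi> ` arc xs k s"
  using cyc_len[of xs n] by (auto simp: arc_def iv_def image_image)

lemma map_cyc: "xs \<in> cyc n \<Longrightarrow> \<pi> permutes {..<n} \<Longrightarrow> map \<pi> xs \<in> cyc n"
  unfolding cyc_def using permutes_image[of \<pi> "{..<n}"] permutes_inj_on[of \<pi> "{..<n}"]
  by (auto simp: distinct_map inj_on_subset)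

lemma arc_lin: assumes "length xs = n" "s + k \<le> n" shows "arc xs k s = set (take k (drop s xs))"
proof -
  have iv: "iv n k s = {s..<s+k}" using assms by (auto simp: iv_def dst_def)
  have "set (take k (drop s xs)) = (\<lambda>p. xs ! p) ` {s..<s+k}"
  proof
    show "set (take k (drop s xs)) \<subseteq> (\<lambda>p. xs ! p) ` {s..<s+k}"
    proof
      fix c assume "c \<in> set (take k (drop s xs))"
      then obtain i where i: "i < length (take k (drop s xs))" "c = take k (drop s xs) ! i"
        by (auto simp: in_set_conv_nth)
      then have "c = xs ! (s + i)" "i < k" using assms by auto
      then show "c \<in> (\<lambda>p. xs ! p) ` {s..<s+k}" by force
    qed
    show "(\<lambda>p. xs ! p) ` {s..<s+k} \<subseteq> set (take k (drop s xs))"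
    proof
      fix c assume "c \<in> (\<lambda>p. xs ! p) ` {s..<s+k}"
      then obtain p where p: "s \<le> p" "p < s + k" "c = xs ! p" by auto
      then have "c = take k (drop s xs) ! (p - s)" using assms by auto
      moreover have "p - s < length (take k (drop s xs))" using p assms by auto
      ultimately show "c \<in> set (take k (drop s xs))" by (metis nth_mem)
    qed
  qed
  then show ?thesis using iv assms by (simp add: arc_def)
qed


lemma avg:
  assumes fC: "finite C" and fF: "finite F" and fG: "finite G"
    and N: "\<forall>A\<in>F \<union> G. card {c\<in>C. R c A} = N" and N0: "0 < N"
    and le: "\<forall>c\<in>C. card {A\<in>F. R c A} \<le> card {A\<in>G. R c A}"
  shows "card F \<le> card G \<and> (card F = card G \<longrightarrow> (\<forall>c\<in>C. card {A\<in>F. R c A} = card {A\<in>G. R c A}))"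
proof -
  have key: "(\<Sum>c\<in>C. card {A\<in>X. R c A}) = N * card X" if fX: "finite X" and XN: "\<forall>A\<in>X. card {c\<in>C. R c A} = N" for X
  proof -
    have "(\<Sum>c\<in>C. card {A\<in>X. R c A}) = (\<Sum>c\<in>C. \<Sum>A\<in>X. if R c A then 1 else 0)"
      using fX by (simp add: sum.inter_filter[symmetric])
    also have "\<dots> = (\<Sum>A\<in>X. \<Sum>c\<in>C. if R c A then 1 else 0)" by (rule sum.swap)
    also have "\<dots> = (\<Sum>A\<in>X. card {c\<in>C. R c A})"
      using fC by (simp add: sum.inter_filter[symmetric])
    also have "\<dots> = (\<Sum>A\<in>X. N)" using XN by simp
    finally show ?thesis by simp
  qed
  have sF: "(\<Sum>c\<in>C. card {A\<in>F. R c A}) = N * card F" using key fF N by blast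
  have sG: "(\<Sum>c\<in>C. card {A\<in>G. R c A}) = N * card G" using key fG N by blast
  have "(\<Sum>c\<in>C. card {A\<in>F. R c A}) \<le> (\<Sum>c\<in>C. card {A\<in>G. R c A})" using le by (intro sum_mono) blast
  then have 1: "card F \<le> card G" using sF sG N0 by simp
  have 2: "\<forall>c\<in>C. card {A\<in>F. R c A} = card {A\<in>G. R c A}" if eq: "card F = card G"
  proof (rule ccontr)
    assume "\<not> ?thesis"
    then obtain c where "c \<in> C" "card {A\<in>F. R c A} \<noteq> card {A\<in>G. R c A}" by blast
    then have "\<exists>c\<in>C. card {A\<in>F. R c A} < card {A\<in>G. R c A}" using le by (meson le_neq_implies_less)
    then have "(\<Sum>c\<in>C. card {A\<in>F. R c A}) < (\<Sum>c\<in>C. card {A\<in>G. R c A})"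
      using le fC by (intro sum_strict_mono_ex1) auto
    then show False using sF sG eq by simp
  qed
  show ?thesis using 1 2 by blast
qed

lemma perm_extend:
  assumes "finite X" "A \<subseteq> X" "B \<subseteq> X" "bij_betw f A B"
  shows "\<exists>\<pi>. \<pi> permutes X \<and> (\<forall>a\<in>A. \<pi> a = f a)"
proof -
  have cA: "card A = card B" using assms(4) bij_betw_same_card by blast
  have "card (X - A) = card (X - B)" using assms cA
    by (simp add: card_Diff_subset finite_subset)
  then obtain g where g: "bij_betw g (X - A) (X - B)"
    using finite_same_card_bij[of "X - A" "X - B"] assms(1) by blast
  define \<pi> where "\<pi> x = (if x \<in> A then f x else if x \<in> X then g x else x)" for x
  have b1: "bij_betw \<pi> A B" using assms(4) by (rule bij_betw_cong[THEN iffD1, rotated]) (simp add: \<pi>_def)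
  have b2: "bij_betw \<pi> (X - A) (X - B)" using g by (rule bij_betw_cong[THEN iffD1, rotated]) (simp add: \<pi>_def)
  have "bij_betw \<pi> (A \<union> (X - A)) (B \<union> (X - B))"
    by (rule bij_betw_combine[OF b1 b2]) auto
  then have "bij_betw \<pi> X X" using assms(2,3) by (simp add: Un_absorb1 Un_Diff_cancel)
  then have "\<pi> permutes X" by (rule bij_imp_permutes) (use assms(2) in \<open>auto simp: \<pi>_def\<close>)
  then show ?thesis by (auto simp: \<pi>_def)
qed


lemma take_exact: "length L1 = k \<Longrightarrow> take k (L1 @ L2) = L1" by simp
lemma drop_exact: "length L1 = k \<Longrightarrow> drop k (L1 @ L2) = L2" by simp

context
  fixes n r :: nat and H :: "nat set set"
  assumes r1: "1 \<le> r" and nr: "2*r < n"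
    and Hsub: "\<forall>S\<in>H. S \<subseteq> {..<n} \<and> card S = r"
    and Hint: "\<forall>S\<in>H. \<forall>T\<in>H. S \<inter> T \<noteq> {}"
    and HP: "\<forall>xs\<in>cyc n. \<exists>p<n. \<forall>s<n. (arc xs r s \<in> H \<longleftrightarrow> dst n s p < r)"
begin

lemma glueK:
  assumes x: "x < n" and y: "y < n" and Q: "Q \<subseteq> {..<n}" "x \<notin> Q" "y \<notin> Q" "card Q = r - 1"
    and inH: "insert x Q \<in> H" and notH: "insert y Q \<notin> H"
    and T: "T \<subseteq> {..<n}" "card T = r" "x \<in> T" "y \<notin> T"
  shows "T \<in> H"
proof -
  have fQ: "finite Q" using Q finite_subset by blast
  have fT: "finite T" using T finite_subset by blast
  have xy: "x \<noteq> y" using T by auto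
  define A where "A = T - Q - {x}"
  define B where "B = T \<inter> Q"
  have fA: "finite A" and fB: "finite B" using fT by (auto simp: A_def B_def)
  have Tdec: "T = insert x (A \<union> B)" using T by (auto simp: A_def B_def)
  have "card (A \<union> B) = card A + card B" using fA fB by (intro card_Un_disjoint) (auto simp: A_def B_def)
  moreover have "x \<notin> A \<union> B" using Q by (auto simp: A_def B_def)
  ultimately have "card T = Suc (card A + card B)" unfolding Tdec using fA fB by simp
  then have cAB: "card A + card B = r - 1" using T by simp
  define a where "a = card A"
  have cQB: "card (Q - B) = r - 1 - card B"
    using Q fQ by (simp add: B_def card_Diff_subset_Int Int_commute)
  have cB: "card B \<le> r - 1" using cAB by simp
  define Y where "Y = insert x (insert y (Q \<union> A))"
  have Yeq: "T \<union> Q \<union> {y} = Y" using Tdec by (auto simp: Y_def B_def)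
  have cY: "card Y = r + 1 + a"
  proof -
    have "card (Q \<union> A) = card Q + card A" using fQ fA by (intro card_Un_disjoint) (auto simp: A_def)
    moreover have "y \<notin> Q \<union> A" using Q T by (auto simp: A_def)
    moreover have "x \<notin> insert y (Q \<union> A)" using Q xy by (auto simp: A_def)
    ultimately show ?thesis unfolding Y_def using fQ fA r1 Q by (simp add: a_def)
  qed
  have Ysub: "Y \<subseteq> {..<n}" using T Q x y by (auto simp: Y_def A_def)
  define Z where "Z = {..<n} - Y"
  have cZ: "card Z = n - (r + 1 + a)" using Ysub cY by (simp add: Z_def card_Diff_subset finite_subset)
  have "r - a \<le> card Z" using cZ nr by simp
  then obtain Z0 where Z0: "Z0 \<subseteq> Z" "card Z0 = r - a" using obtain_subset_with_card_n by metis
  define Rest where "Rest = Z - Z0"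
  have fZ: "finite Z" by (simp add: Z_def)
  have fZ0: "finite Z0" using Z0 fZ finite_subset by blast
  have fR: "finite Rest" using fZ by (simp add: Rest_def)
  define sl where "sl = (sorted_list_of_set :: nat set \<Rightarrow> nat list)"
  define L1 where "L1 = sl Z0 @ sl A"
  define xs where "xs = L1 @ [x] @ sl B @ sl (Q - B) @ [y] @ sl Rest"
  have lZ0: "length (sl Z0) = r - a" using Z0 by (simp add: sl_def)
  have lA: "length (sl A) = a" by (simp add: sl_def a_def)
  have lB: "length (sl B) = card B" by (simp add: sl_def)
  have lQB: "length (sl (Q - B)) = r - 1 - card B" using cQB by (simp add: sl_def)
  have aR: "a \<le> r - 1" using cAB a_def by simp
  have lL1: "length L1 = r" using lZ0 lA aR r1 by (simp add: L1_def)
  have ZY: "Z \<inter> Y = {}" by (auto simp: Z_def)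
  have xscyc: "xs \<in> cyc n"
  proof -
    have d: "distinct xs" using fZ0 fA fB fQ fR Z0 ZY Q xy T
      unfolding xs_def L1_def sl_def Rest_def Y_def
      by (auto simp: A_def B_def)
    have s: "set xs = {..<n}"
    proof -
      have "set xs = Z0 \<union> A \<union> {x} \<union> B \<union> (Q - B) \<union> {y} \<union> Rest"
        using fZ0 fA fB fQ fR unfolding xs_def L1_def sl_def by auto
      also have "\<dots> = Z \<union> Y" using Z0 by (auto simp: Rest_def Y_def B_def A_def)
      also have "\<dots> = {..<n}" using Ysub by (auto simp: Z_def)
      finally show ?thesis .
    qed
    show ?thesis using d s by (simp add: cyc_def)
  qed
  have len: "length xs = n" using cyc_len[OF xscyc] .
  obtain p where p: "p < n" "\<forall>s<n. (arc xs r s \<in> H \<longleftrightarrow> dst n s p < r)" using HP xscyc by blast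
  have arc1: "arc xs r r = insert x Q"
  proof -
    have "arc xs r r = set (take r (drop r xs))" using len nr by (intro arc_lin) auto
    also have "drop r xs = ([x] @ sl B @ sl (Q - B)) @ ([y] @ sl Rest)"
      unfolding xs_def using lL1 by (simp add: drop_exact)
    also have "take r \<dots> = [x] @ sl B @ sl (Q - B)" using lB lQB cB r1 by (intro take_exact) simp
    also have "set \<dots> = insert x Q" using fB fQ by (auto simp: sl_def B_def)
    finally show ?thesis .
  qed
  have arc2: "arc xs r (r + 1) = insert y Q"
  proof -
    have "arc xs r (r+1) = set (take r (drop (r+1) xs))" using len nr by (intro arc_lin) auto
    also have "drop (r+1) xs = (sl B @ sl (Q - B) @ [y]) @ sl Rest"
      unfolding xs_def using lL1 by (simp add: drop_exact)
    also have "take r \<dots> = sl B @ sl (Q - B) @ [y]" using lB lQB cB r1 by (intro take_exact) simp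
    also have "set \<dots> = insert y Q" using fB fQ by (auto simp: sl_def B_def)
    finally show ?thesis .
  qed
  have arc3: "arc xs r (r - a) = T"
  proof -
    have "arc xs r (r - a) = set (take r (drop (r - a) xs))" using len nr by (intro arc_lin) auto
    also have "drop (r - a) xs = (sl A @ [x] @ sl B) @ (sl (Q - B) @ [y] @ sl Rest)"
      unfolding xs_def L1_def using lZ0 by (simp add: drop_exact)
    also have "take r \<dots> = sl A @ [x] @ sl B" using lA lB cAB a_def r1 by (intro take_exact) simp
    also have "set \<dots> = T" using fB fA Tdec by (auto simp: sl_def)
    finally show ?thesis .
  qed
  have "dst n r p < r" using p(2)[rule_format, of r] arc1 inH nr by simp
  moreover have "\<not> dst n (r + 1) p < r" using p(2)[rule_format, of "r+1"] arc2 notH nr r1 by simp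
  ultimately have pr: "p = r" using nr p(1) by (auto simp: dst_def split: if_splits)
  have "dst n (r - a) r < r" using aR r1 by (simp add: dst_def)
  then show ?thesis using p(2)[rule_format, of "r - a"] pr arc3 nr by simp
qed

lemma glue_all:
  assumes good: "x < n" "y < n" "Q \<subseteq> {..<n}" "x \<notin> Q" "y \<notin> Q" "card Q = r - 1"
    "insert x Q \<in> H" "insert y Q \<notin> H"
    and T: "T \<subseteq> {..<n}" "card T = r" "x \<in> T"
  shows "T \<in> H"
proof (cases "y \<in> T")
  case False then show ?thesis using glueK[OF good T] by blast
next
  case True
  have fT: "finite T" using T finite_subset by blast
  have "\<not> {..<n} \<subseteq> T"
  proof
    assume "{..<n} \<subseteq> T"
    then have "card {..<n} \<le> card T" using fT by (rule card_mono[rotated])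
    then show False using T nr by simp
  qed
  then obtain z where z: "z < n" "z \<notin> T" by blast
  have zx: "z \<noteq> x" "z \<noteq> y" using z T True by auto
  have xy: "x \<noteq> y" using good by auto
  have c3': "card {x, y, z} = 3" using zx xy by simp
  have c3: "card ({..<n} - {x, y, z}) = n - 3"
  proof -
    have "{x, y, z} \<subseteq> {..<n}" using good z by simp
    then show ?thesis using c3' by (simp add: card_Diff_subset)
  qed
  have "r - 1 \<le> card ({..<n} - {x, y, z})" using c3 nr by simp
  then obtain R where R: "R \<subseteq> {..<n} - {x, y, z}" "card R = r - 1"
    using obtain_subset_with_card_n[of "r - 1" "{..<n} - {x, y, z}"] by blast
  have fR: "finite R" using R finite_subset by blast
  have cXR: "card ({..<n} - {x, y, z} - R) = n - 3 - (r - 1)" using R c3 fR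
    by (simp add: card_Diff_subset)
  have "r - 1 \<le> card ({..<n} - {x, y, z} - R)" using cXR nr by simp
  then obtain R' where R': "R' \<subseteq> {..<n} - {x, y, z} - R" "card R' = r - 1"
    using obtain_subset_with_card_n[of "r - 1" "{..<n} - {x, y, z} - R"] by blast
  have fR': "finite R'" using R' finite_subset by blast
  have in1: "insert x R \<in> H"
  proof (rule glueK[OF good])
    show "insert x R \<subseteq> {..<n}" "x \<in> insert x R" "y \<notin> insert x R" using R good zx True T by auto
    have "x \<notin> R" using R by auto
    then show "card (insert x R) = r" using R fR r1 by simp
  qed
  have in2: "insert x R' \<in> H"
  proof (rule glueK[OF good])
    show "insert x R' \<subseteq> {..<n}" "x \<in> insert x R'" "y \<notin> insert x R'" using R' good zx True T by auto
    have "x \<notin> R'" using R' by auto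
    then show "card (insert x R') = r" using R' fR' r1 by simp
  qed
  have "insert z R \<notin> H"
  proof
    assume "insert z R \<in> H"
    moreover have "insert z R \<inter> insert x R' = {}" using R R' zx by auto
    ultimately show False using Hint in2 by blast
  qed
  moreover have "R \<subseteq> {..<n}" "x \<notin> R" "z \<notin> R" using R by auto
  ultimately show ?thesis
    using glueK[of x z R T] good(1) z R(2) in1 T by blast
qed

lemma glue_init: assumes "H \<noteq> {}"
  shows "\<exists>x y Q. x < n \<and> y < n \<and> Q \<subseteq> {..<n} \<and> x \<notin> Q \<and> y \<notin> Q \<and> card Q = r - 1
    \<and> insert x Q \<in> H \<and> insert y Q \<notin> H"
proof (rule ccontr)
  assume neg: "\<not> ?thesis"
  have negA: "\<not> (x < n \<and> y < n \<and> Q \<subseteq> {..<n} \<and> x \<notin> Q \<and> y \<notin> Q \<and> card Q = r - 1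
    \<and> insert x Q \<in> H \<and> insert y Q \<notin> H)" for x y Q using neg by blast
  have swap: "insert y (S - {x}) \<in> H" if "S \<in> H" "x \<in> S" "y < n" "y \<notin> S" for S x y
  proof -
    have S: "S \<subseteq> {..<n}" "card S = r" using Hsub that by auto
    have "finite S" using S finite_subset by blast
    then have "card (S - {x}) = r - 1" using S that by simp
    moreover have "insert x (S - {x}) = S" using that by auto
    moreover note negA[of x y "S - {x}"]
    moreover have "x < n" using S that by auto
    moreover have "S - {x} \<subseteq> {..<n}" "x \<notin> S - {x}" "y \<notin> S - {x}" using S that by auto
    ultimately show ?thesis using that by auto
  qed
  obtain S0 where S0: "S0 \<in> H" using assms by blast
  have S0s: "S0 \<subseteq> {..<n}" "card S0 = r" using Hsub S0 by auto
  have "card ({..<n} - S0) = n - r" using S0s by (simp add: card_Diff_subset finite_subset)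
  then have "r \<le> card ({..<n} - S0)" using nr by simp
  then obtain T0 where T0: "T0 \<subseteq> {..<n} - S0" "card T0 = r" using obtain_subset_with_card_n by metis
  have reach: "\<forall>S. S \<in> H \<and> card (S - T0) = k \<longrightarrow> T0 \<in> H" for k
  proof (induction k)
    case 0
    show ?case
    proof (intro allI impI)
      fix S assume S: "S \<in> H \<and> card (S - T0) = 0"
      have Ss: "S \<subseteq> {..<n}" "card S = r" using Hsub S by auto
      have fT0: "finite T0" using T0 finite_subset by blast
      have "finite S" using Ss finite_subset by blast
      then have "S \<subseteq> T0" using S by auto
      then have "S = T0" using Ss T0 fT0 by (intro card_subset_eq) auto
      then show "T0 \<in> H" using S by simp
    qed
  next
    case (Suc k)
    show ?case
    proof (intro allI impI)
      fix S assume S: "S \<in> H \<and> card (S - T0) = Suc k"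
      have Ss: "S \<subseteq> {..<n}" "card S = r" using Hsub S by auto
      have fS: "finite S" using Ss finite_subset by blast
      have fT0: "finite T0" using T0 finite_subset by blast
      obtain x where x: "x \<in> S - T0" using S by (metis card.empty ex_in_conv nat.distinct(1))
      have "card (T0 - S) = card (S - T0)"
        using fS fT0 Ss T0 by (metis card_Diff_subset_Int Int_commute finite_Int)
      then obtain y where y: "y \<in> T0 - S" using S by (metis card.empty ex_in_conv nat.distinct(1))
      have yn: "y < n" using y T0 by auto
      define S' where "S' = insert y (S - {x})"
      have S'H: "S' \<in> H" using swap[of S x y] S x y yn by (simp add: S'_def)
      have "S' - T0 = (S - T0) - {x}" using y x by (auto simp: S'_def)
      then have "card (S' - T0) = k" using S x fS by simp
      then show "T0 \<in> H" using Suc.IH S'H by blast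
    qed
  qed
  have "T0 \<in> H" using reach S0 by blast
  moreover have "S0 \<inter> T0 = {}" using T0 by auto
  ultimately show False using Hint S0 by blast
qed

lemma glue: assumes "H \<noteq> {}"
  shows "\<exists>x<n. \<forall>T. T \<subseteq> {..<n} \<and> card T = r \<and> x \<in> T \<longrightarrow> T \<in> H"
proof -
  obtain x y Q where g: "x < n" "y < n" "Q \<subseteq> {..<n}" "x \<notin> Q" "y \<notin> Q" "card Q = r - 1"
    "insert x Q \<in> H" "insert y Q \<notin> H" using glue_init[OF assms] by blast
  show ?thesis using glue_all[OF g] g(1) by blast
qed

end

lemma card_Inr[simp]: "card (Inr ` P) = card P" by (simp add: card_image inj_on_def)
lemma card_Inl[simp]: "card (Inl ` P) = card P" by (simp add: card_image inj_on_def)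

lemma Inl_notin_Inr[simp]: "Inl m \<notin> Inr ` P" by auto
lemma card_ins_Inl[simp]: "finite P \<Longrightarrow> card (insert (Inl m) (Inr ` P)) = Suc (card P)" by simp

lemma Vdef: "pendant_V (K_V n) = Inl ` {..<n} \<union> Inr ` {..<n}"
  by (simp add: pendant_V_def K_V_def)

lemma finite_Ind: "finite (indep_rsets (pendant_V (K_V n)) E r)"
proof -
  have "indep_rsets (pendant_V (K_V n)) E r \<subseteq> Pow (pendant_V (K_V n))" by (auto simp: indep_rsets_def)
  then show ?thesis using finite_subset by (fastforce simp: Vdef)
qed

lemma indU: "S \<subseteq> {..<n} \<Longrightarrow> card S = r \<Longrightarrow> Inr ` S \<in> indep_rsets (pendant_V (K_V n)) (pendant_E K_E) r"
  by (auto simp: indep_rsets_def Vdef card_image finite_subset)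

lemma indM: assumes "1 \<le> r" "m < n" "P \<subseteq> {..<n}" "m \<notin> P" "card P = r - 1"
  shows "insert (Inl m) (Inr ` P) \<in> indep_rsets (pendant_V (K_V n)) (pendant_E K_E) r"
proof -
  have fP: "finite P" using assms finite_subset by blast
  have "card (insert (Inl m) (Inr ` P)) = r" using assms fP by simp
  then show ?thesis using assms fP by (auto simp: indep_rsets_def Vdef K_E_def)
qed

lemma indcases:
  assumes "A \<in> indep_rsets (pendant_V (K_V n)) (pendant_E K_E) r"
  shows "(\<exists>S. S \<subseteq> {..<n} \<and> card S = r \<and> A = Inr ` S) \<or>
         (\<exists>m P. m < n \<and> P \<subseteq> {..<n} \<and> m \<notin> P \<and> card P = r - 1 \<and> A = insert (Inl m) (Inr ` P))"
proof -
  have A: "A \<subseteq> Inl ` {..<n} \<union> Inr ` {..<n}" "finite A" "card A = r"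
    and ind: "\<forall>x\<in>A. \<forall>y\<in>A. \<not> pendant_E K_E x y"
    using assms by (auto simp: indep_rsets_def Vdef)
  define L where "L = {m. Inl m \<in> A}"
  define P where "P = {i. Inr i \<in> A}"
  have Adec: "A = Inl ` L \<union> Inr ` P"
  proof
    show "A \<subseteq> Inl ` L \<union> Inr ` P"
    proof
      fix v assume "v \<in> A" then show "v \<in> Inl ` L \<union> Inr ` P" by (cases v) (auto simp: L_def P_def)
    qed
    show "Inl ` L \<union> Inr ` P \<subseteq> A" by (auto simp: L_def P_def)
  qed
  have Psub: "P \<subseteq> {..<n}" using A(1) by (auto simp: P_def)
  have Lsub: "L \<subseteq> {..<n}" using A(1) by (auto simp: L_def)
  have fP: "finite P" using Psub finite_subset by blast
  show ?thesis
  proof (cases "L = {}")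
    case True
    then have "A = Inr ` P" using Adec by simp
    moreover then have "card P = r" using A by (simp add: card_image)
    ultimately show ?thesis using Psub by blast
  next
    case False
    then obtain m where m: "m \<in> L" by blast
    have "L = {m}"
    proof
      show "L \<subseteq> {m}"
      proof
        fix m' assume m': "m' \<in> L"
        have "Inl m \<in> A" "Inl m' \<in> A" using m m' by (auto simp: L_def)
        then have "\<not> pendant_E K_E (Inl m) (Inl m')" using ind by blast
        then show "m' \<in> {m}" by (simp add: K_E_def)
      qed
    qed (use m in auto)
    then have Aeq: "A = insert (Inl m) (Inr ` P)" using Adec by simp
    have mP: "m \<notin> P"
    proof
      assume "m \<in> P"
      then have "Inl m \<in> A" "Inr m \<in> A" using m by (auto simp: L_def P_def)
      then have "\<not> pendant_E K_E (Inl m) (Inr m)" using ind by blast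
      then show False by simp
    qed
    have "card A = Suc (card P)" using Aeq mP fP by (simp add: card_image)
    then have "card P = r - 1" using A by simp
    then show ?thesis using Aeq mP Psub Lsub m by blast
  qed
qed

lemma inseq: "insert (Inl m) (Inr ` P) = insert (Inl m') (Inr ` P') \<Longrightarrow> m = m' \<and> P = P'"
proof -
  assume e: "insert (Inl m) (Inr ` P) = insert (Inl m') (Inr ` P')"
  have "Inl m \<in> insert (Inl m') (Inr ` P')" using e by blast
  then have "m = m'" by auto
  moreover have "P = P'"
  proof -
    have "P = {i. Inr i \<in> insert (Inl m) (Inr ` P)}" by auto
    also have "\<dots> = {i. Inr i \<in> insert (Inl m') (Inr ` P')}" using e by simp
    also have "\<dots> = P'" by auto
    finally show ?thesis .
  qed
  ultimately show ?thesis by simp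
qed

lemma Inr_ne_ins: "Inr ` S \<noteq> insert (Inl m) (Inr ` P)" by auto


definition pr :: "nat \<Rightarrow> nat \<Rightarrow> nat" where "pr n s = (if s = 0 then n - 1 else s - 1)"

definition mk :: "nat \<Rightarrow> nat \<Rightarrow> nat list \<Rightarrow> nat \<Rightarrow> (nat + nat) set" where
  "mk n r xs s = insert (Inl (xs ! pr n s)) (Inr ` arc xs (r - 1) s)"

lemma pr_lt: "0 < n \<Longrightarrow> s < n \<Longrightarrow> pr n s < n" by (auto simp: pr_def)
lemma pr_inj: "s < n \<Longrightarrow> t < n \<Longrightarrow> pr n s = pr n t \<Longrightarrow> s = t" by (auto simp: pr_def split: if_splits)
lemma dst_pr: "s < n \<Longrightarrow> dst n s (pr n s) = n - 1" by (auto simp: pr_def dst_def)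

context
  fixes n r :: nat
  assumes r2: "2 \<le> r" and nr: "2 * r \<le> n"
begin

abbreviation "Ind \<equiv> indep_rsets (pendant_V (K_V n)) (pendant_E K_E) r"
definition "isU A \<longleftrightarrow> (\<exists>S. A = Inr ` S)"
definition "relU xs A \<longleftrightarrow> (\<exists>s<n. A = Inr ` arc xs r s)"
definition "relM xs A \<longleftrightarrow> (\<exists>s<n. A = mk n r xs s)"

lemma npos: "0 < n" using r2 nr by simp

lemma mk_props: assumes "xs \<in> cyc n" "s < n"
  shows "mk n r xs s \<in> Ind" "\<not> isU (mk n r xs s)"
proof -
  have m: "xs ! pr n s < n" using nth_in[OF assms(1) pr_lt[OF npos assms(2)]] .
  have "xs ! pr n s \<notin> arc xs (r - 1) s"
    using in_arc[OF assms(1) pr_lt[OF npos assms(2)]] dst_pr[OF assms(2)] nr r2 by simp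
  moreover have "card (arc xs (r - 1) s) = r - 1" using card_arc[OF assms(1) _ assms(2)] nr by simp
  ultimately show "mk n r xs s \<in> Ind"
    unfolding mk_def using indM[of r "xs ! pr n s" n] m arc_sub[OF assms(1)] r2 by simp
  show "\<not> isU (mk n r xs s)" unfolding mk_def isU_def by auto
qed

lemma arcU_props: assumes "xs \<in> cyc n" "s < n"
  shows "Inr ` arc xs r s \<in> Ind" "isU (Inr ` arc xs r s)"
  using indU[OF arc_sub[OF assms(1)] card_arc[OF assms(1) _ assms(2)]] nr
  by (auto simp: isU_def)

lemma isU_form: "A \<in> Ind \<Longrightarrow> isU A \<Longrightarrow> \<exists>S. S \<subseteq> {..<n} \<and> card S = r \<and> A = Inr ` S"
  using indcases[of A n r] by (auto simp: isU_def)

lemma notU_form: "A \<in> Ind \<Longrightarrow> \<not> isU A \<Longrightarrow> \<exists>m P. m < n \<and> P \<subseteq> {..<n} \<and> m \<notin> P \<and> card P = r - 1 \<and> A = insert (Inl m) (Inr ` P)"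
  using indcases[of A n r] by (auto simp: isU_def)

lemma NU_le: assumes A: "A \<in> Ind" "isU A" and A': "A' \<in> Ind" "isU A'"
  shows "card {xs\<in>cyc n. relU xs A} \<le> card {xs\<in>cyc n. relU xs A'}"
proof -
  obtain S where S: "S \<subseteq> {..<n}" "card S = r" "A = Inr ` S" using isU_form A by blast
  obtain S' where S': "S' \<subseteq> {..<n}" "card S' = r" "A' = Inr ` S'" using isU_form A' by blast
  have fS: "finite S" "finite S'" using S(1) S'(1) finite_subset by auto
  obtain f where f: "bij_betw f S S'" using finite_same_card_bij[of S S'] fS S(2) S'(2) by auto
  obtain \<pi> where \<pi>: "\<pi> permutes {..<n}" "\<forall>a\<in>S. \<pi> a = f a" using perm_extend[OF _ S(1) S'(1) f] by blast
  have \<pi>S: "\<pi> ` S = S'" using \<pi>(2) f by (auto simp: bij_betw_def image_def)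
  have inj: "inj_on (map \<pi>) (cyc n)"
    by (rule inj_onI, rule map_inj_on[where f=\<pi>]) (use \<pi>(1) permutes_inj in \<open>auto intro: inj_on_subset\<close>)
  have "map \<pi> ` {xs\<in>cyc n. relU xs A} \<subseteq> {xs\<in>cyc n. relU xs A'}"
  proof
    fix ys assume "ys \<in> map \<pi> ` {xs\<in>cyc n. relU xs A}"
    then obtain xs s where xs: "xs \<in> cyc n" "s < n" "A = Inr ` arc xs r s" "ys = map \<pi> xs"
      by (auto simp: relU_def)
    have "S = arc xs r s" using xs(3) S(3) by (simp add: inj_image_eq_iff)
    then have "arc ys r s = S'" using arc_map[OF xs(1)] xs(4) \<pi>S by simp
    then show "ys \<in> {xs\<in>cyc n. relU xs A'}" using map_cyc[OF xs(1) \<pi>(1)] xs S' by (auto simp: relU_def)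
  qed
  moreover have "inj_on (map \<pi>) {xs\<in>cyc n. relU xs A}" using inj by (rule inj_on_subset) auto
  ultimately show ?thesis using finite_cyc[of n] by (intro card_inj_on_le) auto
qed

lemma NM_le: assumes A: "A \<in> Ind" "\<not> isU A" and A': "A' \<in> Ind" "\<not> isU A'"
  shows "card {xs\<in>cyc n. relM xs A} \<le> card {xs\<in>cyc n. relM xs A'}"
proof -
  obtain m P where P: "m < n" "P \<subseteq> {..<n}" "m \<notin> P" "card P = r - 1" "A = insert (Inl m) (Inr ` P)"
    using notU_form A by blast
  obtain m' P' where P': "m' < n" "P' \<subseteq> {..<n}" "m' \<notin> P'" "card P' = r - 1" "A' = insert (Inl m') (Inr ` P')"
    using notU_form A' by blast
  have fP: "finite P" "finite P'" using P(2) P'(2) finite_subset by auto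
  obtain g where g: "bij_betw g P P'" using finite_same_card_bij[of P P'] fP P(4) P'(4) by auto
  define f where "f x = (if x = m then m' else g x)" for x
  have "\<And>x. x \<in> P \<Longrightarrow> f x = g x" using P(3) by (auto simp: f_def)
  then have f1: "bij_betw f P P'" using g bij_betw_cong[of P f g P'] by simp
  have f2: "bij_betw f {m} {m'}" by (simp add: f_def bij_betw_def)
  have "bij_betw f (P \<union> {m}) (P' \<union> {m'})" by (rule bij_betw_combine[OF f1 f2]) (use P' in auto)
  then obtain \<pi> where \<pi>: "\<pi> permutes {..<n}" "\<forall>a\<in>P \<union> {m}. \<pi> a = f a"
    using perm_extend[of "{..<n}" "P \<union> {m}" "P' \<union> {m'}" f] P P' by auto
  have \<pi>P: "\<pi> ` P = P'" using \<pi>(2) g P(3) by (auto simp: bij_betw_def image_def f_def)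
  have \<pi>m: "\<pi> m = m'" using \<pi>(2) by (simp add: f_def)
  have inj: "inj_on (map \<pi>) (cyc n)"
    by (rule inj_onI, rule map_inj_on[where f=\<pi>]) (use \<pi>(1) permutes_inj in \<open>auto intro: inj_on_subset\<close>)
  have "map \<pi> ` {xs\<in>cyc n. relM xs A} \<subseteq> {xs\<in>cyc n. relM xs A'}"
  proof
    fix ys assume "ys \<in> map \<pi> ` {xs\<in>cyc n. relM xs A}"
    then obtain xs s where xs: "xs \<in> cyc n" "s < n" "A = mk n r xs s" "ys = map \<pi> xs"
      by (auto simp: relM_def)
    have e: "m = xs ! pr n s \<and> P = arc xs (r - 1) s" using xs(3) P(5) unfolding mk_def by (intro inseq) simp
    have "mk n r ys s = insert (Inl (\<pi> (xs ! pr n s))) (Inr ` (\<pi> ` arc xs (r - 1) s))"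
      unfolding mk_def using arc_map[OF xs(1)] xs(4) cyc_len[OF xs(1)] pr_lt[OF npos xs(2)] by simp
    then have "mk n r ys s = A'" using e \<pi>P \<pi>m P' by simp
    then show "ys \<in> {xs\<in>cyc n. relM xs A'}" using map_cyc[OF xs(1) \<pi>(1)] xs by (auto simp: relM_def)
  qed
  moreover have "inj_on (map \<pi>) {xs\<in>cyc n. relM xs A}" using inj by (rule inj_on_subset) auto
  ultimately show ?thesis using finite_cyc[of n] by (intro card_inj_on_le) auto
qed

end

context
  fixes n r :: nat
  assumes r2: "2 \<le> r" and nr: "2 * r \<le> n"
begin

abbreviation "Ind' \<equiv> indep_rsets (pendant_V (K_V n)) (pendant_E K_E) r"
lemmas relU_eq = relU_def[OF r2 nr] and relM_eq = relM_def[OF r2 nr] and isU_eq = isU_def[OF r2 nr]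

lemma cycU_F: assumes F: "F \<subseteq> Ind'" "intersecting F" and xs: "xs \<in> cyc n"
  shows "{A\<in>{A\<in>F. isU A}. relU n r xs A} = (\<lambda>s. (Inr ` arc xs r s :: (nat + nat) set)) ` {s. s < n \<and> Inr ` arc xs r s \<in> F}"
    and "card {s. s < n \<and> Inr ` arc xs r s \<in> F} \<le> r"
proof -
  show "{A\<in>{A\<in>F. isU A}. relU n r xs A} = (\<lambda>s. (Inr ` arc xs r s :: (nat + nat) set)) ` {s. s < n \<and> Inr ` arc xs r s \<in> F}"
  proof (intro equalityI subsetI)
    fix A assume "A \<in> {A\<in>{A\<in>F. isU A}. relU n r xs A}"
    then obtain s where "A \<in> F" "s < n" "A = Inr ` arc xs r s" unfolding relU_eq by blast
    then show "A \<in> (\<lambda>s. (Inr ` arc xs r s :: (nat + nat) set)) ` {s. s < n \<and> Inr ` arc xs r s \<in> F}" by blast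
  next
    fix A assume "A \<in> (\<lambda>s. (Inr ` arc xs r s :: (nat + nat) set)) ` {s. s < n \<and> Inr ` arc xs r s \<in> F}"
    then obtain s where s: "s < n" "Inr ` arc xs r s \<in> F" "A = Inr ` arc xs r s" by blast
    have "isU A" using arcU_props(2)[OF r2 nr xs s(1)] s(3) by simp
    moreover have "relU n r xs A" unfolding relU_eq using s(1,3) by blast
    ultimately show "A \<in> {A\<in>{A\<in>F. isU A}. relU n r xs A}" using s by blast
  qed
  have int: "\<forall>s\<in>{s. s < n \<and> Inr ` arc xs r s \<in> F}. \<forall>t\<in>{s. s < n \<and> Inr ` arc xs r s \<in> F}.
      dst n s t < r \<or> dst n t s < r"
  proof (intro ballI)
    fix s t assume s: "s \<in> {s. s < n \<and> Inr ` arc xs r s \<in> F}" and t: "t \<in> {s. s < n \<and> Inr ` arc xs r s \<in> F}"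
    have a: "Inr ` arc xs r s \<in> F" and b: "Inr ` arc xs r t \<in> F" using s t by auto
    have "(Inr ` arc xs r s :: (nat + nat) set) \<inter> Inr ` arc xs r t \<noteq> {}" using F(2)[unfolded intersecting_def, rule_format, OF a b] .
    then have "arc xs r s \<inter> arc xs r t \<noteq> {}" by (simp add: image_Int[symmetric])
    moreover have "s < n" "t < n" using s t by simp_all
    ultimately show "dst n s t < r \<or> dst n t s < r" using arc_inter[OF xs, of s t r] by blast
  qed
  have sub: "{s. s < n \<and> Inr ` arc xs r s \<in> F} \<subseteq> {..<n}" by auto
  have "1 \<le> r" "2 * r \<le> n" using r2 nr by auto
  then show "card {s. s < n \<and> Inr ` arc xs r s \<in> F} \<le> r" using katona[of r n "{s. s < n \<and> Inr ` arc xs r s \<in> F}"] sub int by blast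
qed

lemma cycU_star: assumes xs: "xs \<in> cyc n" and c: "c < n"
  shows "r \<le> card {A\<in>{A\<in>Ind'. Inr c \<in> A \<and> isU A}. relU n r xs A}"
proof -
  obtain q where q: "q < n" "xs ! q = c" using pos_ex[OF xs c] by blast
  define W where "W = {s. s < n \<and> dst n s q < r}"
  have c1: "r \<le> card W" unfolding W_def using card_ends[of r n q] q nr by simp
  have c2: "card W = card ((\<lambda>s. (Inr ` arc xs r s :: (nat + nat) set)) ` W)"
  proof (rule card_image[symmetric], rule inj_onI)
    fix s t assume "s \<in> W" "t \<in> W" "Inr ` arc xs r s = Inr ` arc xs r t"
    then show "s = t" using arc_inj[OF xs, of s t r] r2 nr by (auto simp: W_def inj_image_eq_iff)
  qed
  have c3: "card ((\<lambda>s. (Inr ` arc xs r s :: (nat + nat) set)) ` W) \<le> card {A\<in>{A\<in>Ind'. Inr c \<in> A \<and> isU A}. relU n r xs A}"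
  proof (rule card_mono)
    show "finite {A\<in>{A\<in>Ind'. Inr c \<in> A \<and> isU A}. relU n r xs A}" using finite_Ind[of n "pendant_E K_E" r] by simp
    show "(\<lambda>s. (Inr ` arc xs r s :: (nat + nat) set)) ` W \<subseteq> {A\<in>{A\<in>Ind'. Inr c \<in> A \<and> isU A}. relU n r xs A}"
    proof
      fix A assume "A \<in> (\<lambda>s. (Inr ` arc xs r s :: (nat + nat) set)) ` W"
      then obtain s where s: "s < n" "dst n s q < r" "A = Inr ` arc xs r s" by (auto simp: W_def)
      have "c \<in> arc xs r s" using in_arc[OF xs q(1)] q s by simp
      then have "Inr c \<in> A" using s(3) by blast
      moreover have "relU n r xs A" unfolding relU_eq using s(1,3) by blast
      moreover have "A \<in> Ind'" "isU A" using arcU_props[OF r2 nr xs s(1)] s(3) by simp_all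
      ultimately show "A \<in> {A\<in>{A\<in>Ind'. Inr c \<in> A \<and> isU A}. relU n r xs A}" by blast
    qed
  qed
  show ?thesis using c1 c2 c3 by linarith
qed

lemma cycM_F: assumes F: "F \<subseteq> Ind'" "intersecting F" and xs: "xs \<in> cyc n"
  shows "card {A\<in>{A\<in>F. \<not> isU A}. relM n r xs A} \<le> r - 1"
proof -
  define W where "W = {s. s < n \<and> mk n r xs s \<in> F}"
  have eq: "{A\<in>{A\<in>F. \<not> isU A}. relM n r xs A} = mk n r xs ` W"
  proof (intro equalityI subsetI)
    fix A assume "A \<in> {A\<in>{A\<in>F. \<not> isU A}. relM n r xs A}"
    then obtain s where "A \<in> F" "s < n" "A = mk n r xs s" unfolding relM_eq by blast
    then show "A \<in> mk n r xs ` W" unfolding W_def by blast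
  next
    fix A assume "A \<in> mk n r xs ` W"
    then obtain s where s: "s < n" "mk n r xs s \<in> F" "A = mk n r xs s" unfolding W_def by blast
    have "\<not> isU A" using mk_props(2)[OF r2 nr xs s(1)] s(3) by simp
    moreover have "relM n r xs A" unfolding relM_eq using s(1,3) by blast
    ultimately show "A \<in> {A\<in>{A\<in>F. \<not> isU A}. relM n r xs A}" using s by blast
  qed
  have int: "\<forall>s\<in>W. \<forall>t\<in>W. dst n s t < r - 1 \<or> dst n t s < r - 1"
  proof (intro ballI)
    fix s t assume s: "s \<in> W" and t: "t \<in> W"
    show "dst n s t < r - 1 \<or> dst n t s < r - 1"
    proof (cases "s = t")
      case True then show ?thesis using r2 by simp
    next
      case False
      have a: "mk n r xs s \<in> F" and b: "mk n r xs t \<in> F" using s t by (auto simp: W_def)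
      have "mk n r xs s \<inter> mk n r xs t \<noteq> {}" using F(2)[unfolded intersecting_def, rule_format, OF a b] .
      then obtain e where e: "e \<in> mk n r xs s" "e \<in> mk n r xs t" by blast
      show ?thesis
      proof (cases e)
        case (Inl a)
        then have "xs ! pr n s = xs ! pr n t" using e by (auto simp: mk_def)
        moreover have sn: "s < n" "t < n" using s t by (simp_all add: W_def)
        ultimately have "pr n s = pr n t" using nth_inj[OF xs] pr_lt[OF npos[OF r2 nr]] by blast
        then show ?thesis using pr_inj sn False by blast
      next
        case (Inr b)
        then have "b \<in> arc xs (r - 1) s" "b \<in> arc xs (r - 1) t" using e by (auto simp: mk_def)
        then have "arc xs (r - 1) s \<inter> arc xs (r - 1) t \<noteq> {}" by blast
        moreover have "s < n" "t < n" using s t by (simp_all add: W_def)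
        ultimately show ?thesis using arc_inter[OF xs, of s t "r - 1"] by blast
      qed
    qed
  qed
  have sub: "W \<subseteq> {..<n}" by (auto simp: W_def)
  have "1 \<le> r - 1" "2 * (r - 1) \<le> n" using r2 nr by auto
  then have "card W \<le> r - 1" using katona[of "r - 1" n W] sub int by blast
  moreover have "card (mk n r xs ` W) \<le> card W" by (rule card_image_le) (simp add: W_def)
  ultimately show ?thesis unfolding eq by linarith
qed

lemma cycM_star: assumes xs: "xs \<in> cyc n" and c: "c < n"
  shows "r - 1 \<le> card {A\<in>{A\<in>Ind'. Inr c \<in> A \<and> \<not> isU A}. relM n r xs A}"
proof -
  obtain q where q: "q < n" "xs ! q = c" using pos_ex[OF xs c] by blast
  define W where "W = {s. s < n \<and> dst n s q < r - 1}"
  have c1: "r - 1 \<le> card W" unfolding W_def using card_ends[of "r - 1" n q] q nr by simp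
  have c2: "card W = card (mk n r xs ` W)"
  proof (rule card_image[symmetric], rule inj_onI)
    fix s t assume st: "s \<in> W" "t \<in> W" "mk n r xs s = mk n r xs t"
    have "xs ! pr n s = xs ! pr n t" using inseq[OF st(3)[unfolded mk_def]] by simp
    moreover have sn: "s < n" "t < n" using st by (simp_all add: W_def)
    ultimately have "pr n s = pr n t" using nth_inj[OF xs] pr_lt[OF npos[OF r2 nr]] by blast
    then show "s = t" using pr_inj sn by blast
  qed
  have c3: "card (mk n r xs ` W) \<le> card {A\<in>{A\<in>Ind'. Inr c \<in> A \<and> \<not> isU A}. relM n r xs A}"
  proof (rule card_mono)
    show "finite {A\<in>{A\<in>Ind'. Inr c \<in> A \<and> \<not> isU A}. relM n r xs A}" using finite_Ind[of n "pendant_E K_E" r] by simp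
    show "mk n r xs ` W \<subseteq> {A\<in>{A\<in>Ind'. Inr c \<in> A \<and> \<not> isU A}. relM n r xs A}"
    proof
      fix A assume "A \<in> mk n r xs ` W"
      then obtain s where s: "s < n" "dst n s q < r - 1" "A = mk n r xs s" by (auto simp: W_def)
      have "c \<in> arc xs (r - 1) s" using in_arc[OF xs q(1)] q s by simp
      then have "Inr c \<in> A" using s(3) by (simp add: mk_def)
      moreover have "relM n r xs A" unfolding relM_eq using s(1,3) by blast
      moreover have "A \<in> Ind'" "\<not> isU A" using mk_props[OF r2 nr xs s(1)] s(3) by simp_all
      ultimately show "A \<in> {A\<in>{A\<in>Ind'. Inr c \<in> A \<and> \<not> isU A}. relM n r xs A}" by blast
    qed
  qed
  show ?thesis using c1 c2 c3 by linarith
qed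

end

lemma avoid_set: assumes "1 \<le> r" "x < n" "D \<subseteq> {..<n}" "x \<notin> D" "card D + r \<le> n"
  shows "\<exists>T. T \<subseteq> {..<n} \<and> card T = r \<and> x \<in> T \<and> T \<inter> D = {}"
proof -
  have fD: "finite D" using assms(3) finite_subset by blast
  have "insert x D \<subseteq> {..<n}" using assms by auto
  then have "card ({..<n} - insert x D) = n - Suc (card D)"
    using fD assms(4) by (simp add: card_Diff_subset)
  then have "r - 1 \<le> card ({..<n} - insert x D)" using assms by simp
  then obtain R where R: "R \<subseteq> {..<n} - insert x D" "card R = r - 1"
    using obtain_subset_with_card_n[of "r - 1" "{..<n} - insert x D"] by blast
  have fR: "finite R" using R(1) finite_subset by blast
  have "x \<notin> R" using R by auto
  then have "card (insert x R) = r" using fR R assms(1) by simp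
  then show ?thesis using R assms by (intro exI[of _ "insert x R"]) auto
qed

lemma card_part: "finite X \<Longrightarrow> card X = card {A\<in>X. P A} + card {A\<in>X. \<not> P A}"
proof -
  assume f: "finite X"
  have "X = {A\<in>X. P A} \<union> {A\<in>X. \<not> P A}" by auto
  then have "card X = card ({A\<in>X. P A} \<union> {A\<in>X. \<not> P A})" by simp
  also have "\<dots> = card {A\<in>X. P A} + card {A\<in>X. \<not> P A}" using f by (intro card_Un_disjoint) auto
  finally show ?thesis .
qed

context
  fixes n r :: nat
  assumes r2: "2 \<le> r" and nr: "2 * r \<le> n"
begin

abbreviation "Ind5 \<equiv> indep_rsets (pendant_V (K_V n)) (pendant_E K_E) r"
lemmas relU_eq5 = relU_def[OF r2 nr] and relM_eq5 = relM_def[OF r2 nr] and isU_eq5 = isU_def[OF r2 nr]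

lemma npos5: "0 < n" using r2 nr by simp

lemma finInd: "finite Ind5" using finite_Ind[of n "pendant_E K_E" r] .

lemma boundU: assumes F: "F \<subseteq> Ind5" "intersecting F" and c: "c < n"
  shows "card {A\<in>F. isU A} \<le> card {A\<in>Ind5. Inr c \<in> A \<and> isU A} \<and>
    (card {A\<in>F. isU A} = card {A\<in>Ind5. Inr c \<in> A \<and> isU A} \<longrightarrow>
      (\<forall>xs\<in>cyc n. card {A\<in>{A\<in>F. isU A}. relU n r xs A} = card {A\<in>{A\<in>Ind5. Inr c \<in> A \<and> isU A}. relU n r xs A}))"
proof -
  define A0 where "A0 = (Inr ` arc [0..<n] r 0 :: (nat + nat) set)"
  have A0: "A0 \<in> Ind5" "isU A0" using arcU_props[OF r2 nr upt_cyc npos5] by (simp_all add: A0_def)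
  define N where "N = card {xs\<in>cyc n. relU n r xs A0}"
  have Nc: "\<forall>A\<in>{A\<in>F. isU A} \<union> {A\<in>Ind5. Inr c \<in> A \<and> isU A}. card {xs\<in>cyc n. relU n r xs A} = N"
  proof
    fix A assume "A \<in> {A\<in>F. isU A} \<union> {A\<in>Ind5. Inr c \<in> A \<and> isU A}"
    then have A: "A \<in> Ind5" "isU A" using F by auto
    show "card {xs\<in>cyc n. relU n r xs A} = N"
      unfolding N_def using NU_le[OF r2 nr A A0] NU_le[OF r2 nr A0 A] by simp
  qed
  have "[0..<n] \<in> {xs\<in>cyc n. relU n r xs A0}" using upt_cyc npos5 by (auto simp: relU_eq5 A0_def)
  then have N0: "0 < N" unfolding N_def using finite_cyc[of n] by (auto simp: card_gt_0_iff)
  have le: "\<forall>xs\<in>cyc n. card {A\<in>{A\<in>F. isU A}. relU n r xs A} \<le> card {A\<in>{A\<in>Ind5. Inr c \<in> A \<and> isU A}. relU n r xs A}"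
  proof
    fix xs assume xs: "xs \<in> cyc n"
    have "card {A\<in>{A\<in>F. isU A}. relU n r xs A} \<le> card {s. s < n \<and> Inr ` arc xs r s \<in> F}"
      unfolding cycU_F(1)[OF r2 nr F xs] by (rule card_image_le) simp
    also have "\<dots> \<le> r" by (rule cycU_F(2)[OF r2 nr F xs])
    also have "\<dots> \<le> card {A\<in>{A\<in>Ind5. Inr c \<in> A \<and> isU A}. relU n r xs A}" by (rule cycU_star[OF r2 nr xs c])
    finally show "card {A\<in>{A\<in>F. isU A}. relU n r xs A} \<le> card {A\<in>{A\<in>Ind5. Inr c \<in> A \<and> isU A}. relU n r xs A}" .
  qed
  have fF: "finite {A\<in>F. isU A}" using F finInd finite_subset by (metis (no_types, lifting) mem_Collect_eq subsetI subset_iff)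
  have fG: "finite {A\<in>Ind5. Inr c \<in> A \<and> isU A}" using finInd by simp
  show ?thesis by (rule avg[OF finite_cyc fF fG Nc N0 le])
qed

lemma boundM: assumes F: "F \<subseteq> Ind5" "intersecting F" and c: "c < n"
  shows "card {A\<in>F. \<not> isU A} \<le> card {A\<in>Ind5. Inr c \<in> A \<and> \<not> isU A}"
proof -
  define A0 where "A0 = mk n r [0..<n] 0"
  have A0: "A0 \<in> Ind5" "\<not> isU A0" using mk_props[OF r2 nr upt_cyc npos5] by (simp_all add: A0_def)
  define N where "N = card {xs\<in>cyc n. relM n r xs A0}"
  have Nc: "\<forall>A\<in>{A\<in>F. \<not> isU A} \<union> {A\<in>Ind5. Inr c \<in> A \<and> \<not> isU A}. card {xs\<in>cyc n. relM n r xs A} = N"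
  proof
    fix A assume "A \<in> {A\<in>F. \<not> isU A} \<union> {A\<in>Ind5. Inr c \<in> A \<and> \<not> isU A}"
    then have A: "A \<in> Ind5" "\<not> isU A" using F by auto
    show "card {xs\<in>cyc n. relM n r xs A} = N"
      unfolding N_def using NM_le[OF r2 nr A A0] NM_le[OF r2 nr A0 A] by simp
  qed
  have "[0..<n] \<in> {xs\<in>cyc n. relM n r xs A0}" using upt_cyc npos5 by (auto simp: relM_eq5 A0_def)
  then have N0: "0 < N" unfolding N_def using finite_cyc[of n] by (auto simp: card_gt_0_iff)
  have le: "\<forall>xs\<in>cyc n. card {A\<in>{A\<in>F. \<not> isU A}. relM n r xs A} \<le> card {A\<in>{A\<in>Ind5. Inr c \<in> A \<and> \<not> isU A}. relM n r xs A}"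
    using cycM_F[OF r2 nr F] cycM_star[OF r2 nr _ c] le_trans by blast
  have fF: "finite {A\<in>F. \<not> isU A}" using F finInd finite_subset by (metis (no_types, lifting) mem_Collect_eq subsetI subset_iff)
  have fG: "finite {A\<in>Ind5. Inr c \<in> A \<and> \<not> isU A}" using finInd by simp
  show ?thesis using avg[OF finite_cyc fF fG Nc N0 le] by blast
qed

end

lemma max_ge: assumes "finite (indep_rsets V E r)" "F \<subseteq> indep_rsets V E r" "intersecting F"
  shows "card F \<le> max_intersecting V E r"
proof -
  have "{card F | F. F \<subseteq> indep_rsets V E r \<and> intersecting F} \<subseteq> card ` Pow (indep_rsets V E r)" by auto
  then have fin: "finite {card F | F. F \<subseteq> indep_rsets V E r \<and> intersecting F}"
    using assms(1) finite_subset by blast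
  have "card F \<in> {card F | F. F \<subseteq> indep_rsets V E r \<and> intersecting F}" using assms(2,3) by blast
  then show ?thesis unfolding max_intersecting_def by (rule Max_ge[OF fin])
qed

lemma max_eqI': assumes "finite (indep_rsets V E r)" "G \<subseteq> indep_rsets V E r" "intersecting G"
    "\<And>F. F \<subseteq> indep_rsets V E r \<Longrightarrow> intersecting F \<Longrightarrow> card F \<le> card G"
  shows "max_intersecting V E r = card G"
proof -
  have "{card F | F. F \<subseteq> indep_rsets V E r \<and> intersecting F} \<subseteq> card ` Pow (indep_rsets V E r)" by auto
  then have fin: "finite {card F | F. F \<subseteq> indep_rsets V E r \<and> intersecting F}"
    using assms(1) finite_subset by blast
  have mem: "card G \<in> {card F | F. F \<subseteq> indep_rsets V E r \<and> intersecting F}" using assms(2,3) by blast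
  have le: "y \<le> card G" if yin: "y \<in> {card F | F. F \<subseteq> indep_rsets V E r \<and> intersecting F}" for y
  proof -
    obtain F where "y = card F" "F \<subseteq> indep_rsets V E r" "intersecting F" using yin by blast
    then show ?thesis using assms(4) by simp
  qed
  show ?thesis unfolding max_intersecting_def
    by (rule Max_eqI[OF fin le mem])
qed

lemma star_int: "intersecting (indep_star V E r v)"
  unfolding intersecting_def indep_star_def by blast

lemma star_sub: "indep_star V E r v \<subseteq> indep_rsets V E r"
  unfolding indep_star_def by blast

context
  fixes n r :: nat
  assumes r2: "2 \<le> r" and nr: "2 * r \<le> n"
begin

abbreviation "Ind6 \<equiv> indep_rsets (pendant_V (K_V n)) (pendant_E K_E) r"
abbreviation "St c \<equiv> indep_star (pendant_V (K_V n)) (pendant_E K_E) r (Inr c)"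

lemma card_St: "card (St c) = card {A\<in>Ind6. Inr c \<in> A \<and> isU A} + card {A\<in>Ind6. Inr c \<in> A \<and> \<not> isU A}"
proof -
  have f: "finite (St c)" by (rule finite_subset[OF star_sub finInd[OF r2 nr]])
  have "card (St c) = card {A\<in>St c. isU A} + card {A\<in>St c. \<not> isU A}" by (rule card_part[OF f])
  moreover have "{A\<in>St c. isU A} = {A\<in>Ind6. Inr c \<in> A \<and> isU A}" unfolding indep_star_def by blast
  moreover have "{A\<in>St c. \<not> isU A} = {A\<in>Ind6. Inr c \<in> A \<and> \<not> isU A}" unfolding indep_star_def by blast
  ultimately show ?thesis by simp
qed

lemma bound_all: assumes "F \<subseteq> Ind6" "intersecting F" shows "card F \<le> card (St 0)"
proof -
  have fF: "finite F" by (rule finite_subset[OF assms(1) finInd[OF r2 nr]])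
  have "card F = card {A\<in>F. isU A} + card {A\<in>F. \<not> isU A}" by (rule card_part[OF fF])
  then show ?thesis using boundU[OF r2 nr assms npos5[OF r2 nr]] boundM[OF r2 nr assms npos5[OF r2 nr]] card_St[of 0]
    by linarith
qed

lemma max_St: "max_intersecting (pendant_V (K_V n)) (pendant_E K_E) r = card (St 0)"
  by (rule max_eqI'[OF finInd[OF r2 nr] star_sub star_int bound_all])

lemma rEKR2: "r_EKR (pendant_V (K_V n)) (pendant_E K_E) r"
proof -
  have "Inr 0 \<in> pendant_V (K_V n)" using npos5[OF r2 nr] by (simp add: Vdef)
  then show ?thesis unfolding r_EKR_def using max_St by (intro bexI[of _ "Inr 0"]) simp_all
qed

lemma strict2: assumes nr': "2 * r < n"
  shows "strictly_r_EKR (pendant_V (K_V n)) (pendant_E K_E) r"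
  unfolding strictly_r_EKR_def
proof (intro conjI rEKR2 allI impI)
  fix F assume FF: "F \<subseteq> Ind6 \<and> intersecting F \<and> card F = max_intersecting (pendant_V (K_V n)) (pendant_E K_E) r"
  then have F: "F \<subseteq> Ind6" "intersecting F" and cF: "card F = card (St 0)" using max_St by auto
  have fF: "finite F" by (rule finite_subset[OF F(1) finInd[OF r2 nr]])
  have cF2: "card F = card {A\<in>F. isU A} + card {A\<in>F. \<not> isU A}" by (rule card_part[OF fF])
  have bU: "card {A\<in>F. isU A} \<le> card {A\<in>Ind6. Inr 0 \<in> A \<and> isU A}" and
    eqU: "card {A\<in>F. isU A} = card {A\<in>Ind6. Inr 0 \<in> A \<and> isU A} \<longrightarrow>
      (\<forall>xs\<in>cyc n. card {A\<in>{A\<in>F. isU A}. relU n r xs A} = card {A\<in>{A\<in>Ind6. Inr 0 \<in> A \<and> isU A}. relU n r xs A})"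
    using boundU[OF r2 nr F npos5[OF r2 nr]] by auto
  have bM: "card {A\<in>F. \<not> isU A} \<le> card {A\<in>Ind6. Inr 0 \<in> A \<and> \<not> isU A}"
    using boundM[OF r2 nr F npos5[OF r2 nr]] .
  have "card {A\<in>F. isU A} = card {A\<in>Ind6. Inr 0 \<in> A \<and> isU A}"
    using cF cF2 card_St[of 0] bU bM by linarith
  then have cyc_eq: "\<forall>xs\<in>cyc n. card {A\<in>{A\<in>F. isU A}. relU n r xs A} = card {A\<in>{A\<in>Ind6. Inr 0 \<in> A \<and> isU A}. relU n r xs A}"
    using eqU by blast
  define H where "H = {S. (Inr ` S :: (nat + nat) set) \<in> F}"
  have HP: "\<forall>xs\<in>cyc n. \<exists>p<n. \<forall>s<n. (arc xs r s \<in> H \<longleftrightarrow> dst n s p < r)"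
  proof
    fix xs assume xs: "xs \<in> cyc n"
    define W where "W = {s. s < n \<and> (Inr ` arc xs r s :: (nat + nat) set) \<in> F}"
    have "r \<le> card {A\<in>{A\<in>Ind6. Inr 0 \<in> A \<and> isU A}. relU n r xs A}"
      by (rule cycU_star[OF r2 nr xs npos5[OF r2 nr]])
    also have "\<dots> = card {A\<in>{A\<in>F. isU A}. relU n r xs A}" using cyc_eq xs by simp
    also have "\<dots> \<le> card W" unfolding cycU_F(1)[OF r2 nr F xs] W_def by (rule card_image_le) simp
    finally have c1: "r \<le> card W" .
    have c2: "card W \<le> r" unfolding W_def by (rule cycU_F(2)[OF r2 nr F xs])
    have int: "\<forall>s\<in>W. \<forall>t\<in>W. dst n s t < r \<or> dst n t s < r"
    proof (intro ballI)
      fix s t assume s: "s \<in> W" and t: "t \<in> W"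
      have a: "(Inr ` arc xs r s :: (nat + nat) set) \<in> F" and b: "(Inr ` arc xs r t :: (nat + nat) set) \<in> F"
        using s t by (auto simp: W_def)
      have "(Inr ` arc xs r s :: (nat + nat) set) \<inter> Inr ` arc xs r t \<noteq> {}"
        using F(2)[unfolded intersecting_def, rule_format, OF a b] .
      then have "arc xs r s \<inter> arc xs r t \<noteq> {}" by (simp add: image_Int[symmetric])
      moreover have "s < n" "t < n" using s t by (simp_all add: W_def)
      ultimately show "dst n s t < r \<or> dst n t s < r" using arc_inter[OF xs, of s t r] by blast
    qed
    have "1 \<le> r" "2 * r < n" "W \<subseteq> {..<n}" "card W = r" using r2 nr' c1 c2 by (auto simp: W_def)
    then obtain p where p: "p < n" "W = {s. s < n \<and> dst n s p < r}" using katona_uniq[of r n W] int by blast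
    have "\<forall>s<n. (arc xs r s \<in> H \<longleftrightarrow> dst n s p < r)"
    proof (intro allI impI)
      fix s assume "s < n"
      then show "arc xs r s \<in> H \<longleftrightarrow> dst n s p < r" using p(2) unfolding H_def W_def by blast
    qed
    then show "\<exists>p<n. \<forall>s<n. (arc xs r s \<in> H \<longleftrightarrow> dst n s p < r)" using p(1) by blast
  qed
  have Hsub: "\<forall>S\<in>H. S \<subseteq> {..<n} \<and> card S = r"
  proof
    fix S assume "S \<in> H"
    then have "(Inr ` S :: (nat + nat) set) \<in> Ind6" using F by (auto simp: H_def)
    from indcases[OF this] show "S \<subseteq> {..<n} \<and> card S = r"
    proof
      assume "\<exists>S'. S' \<subseteq> {..<n} \<and> card S' = r \<and> (Inr ` S :: (nat + nat) set) = Inr ` S'"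
      then obtain S' where "S' \<subseteq> {..<n}" "card S' = r" "(Inr ` S :: (nat + nat) set) = Inr ` S'" by blast
      then show ?thesis by (simp add: inj_image_eq_iff)
    next
      assume "\<exists>m P. m < n \<and> P \<subseteq> {..<n} \<and> m \<notin> P \<and> card P = r - 1 \<and> (Inr ` S :: (nat + nat) set) = insert (Inl m) (Inr ` P)"
      then show ?thesis by auto
    qed
  qed
  have Hint: "\<forall>S\<in>H. \<forall>T\<in>H. S \<inter> T \<noteq> {}"
  proof (intro ballI)
    fix S T assume "S \<in> H" "T \<in> H"
    then have a: "(Inr ` S :: (nat + nat) set) \<in> F" and b: "(Inr ` T :: (nat + nat) set) \<in> F" by (auto simp: H_def)
    have "(Inr ` S :: (nat + nat) set) \<inter> Inr ` T \<noteq> {}" using F(2)[unfolded intersecting_def, rule_format, OF a b] .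
    then show "S \<inter> T \<noteq> {}" by (simp add: image_Int[symmetric])
  qed
  have Hne: "H \<noteq> {}"
  proof -
    have "{..<r} \<subseteq> {..<n}" "card {..<r} = r" using nr by auto
    then have "(Inr ` {..<r} :: (nat + nat) set) \<in> {A\<in>Ind6. Inr 0 \<in> A \<and> isU A}"
      using indU[of "{..<r}" n r] r2 by (auto simp: isU_eq5[OF r2 nr] image_iff)
    then have ne: "{A\<in>Ind6. Inr 0 \<in> A \<and> isU A} \<noteq> {}" by blast
    have "finite {A\<in>Ind6. Inr 0 \<in> A \<and> isU A}" using finInd[OF r2 nr] by simp
    then have "0 < card {A\<in>Ind6. Inr 0 \<in> A \<and> isU A}" using ne card_gt_0_iff by blast
    then have "0 < card {A\<in>F. isU A}" using \<open>card {A\<in>F. isU A} = card {A\<in>Ind6. Inr 0 \<in> A \<and> isU A}\<close> by simp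
    then have "{A\<in>F. isU A} \<noteq> {}" using card_gt_0_iff by blast
    then obtain A where "A \<in> F" "isU A" by blast
    then obtain S where "A = Inr ` S" by (auto simp: isU_eq5[OF r2 nr])
    then show ?thesis using \<open>A \<in> F\<close> by (auto simp: H_def)
  qed
  have r1: "1 \<le> r" using r2 by simp
  obtain x where x: "x < n" and allx: "\<forall>T. T \<subseteq> {..<n} \<and> card T = r \<and> x \<in> T \<longrightarrow> T \<in> H"
    using glue[OF r1 nr' Hsub Hint HP Hne] by blast
  have sub: "F \<subseteq> St x"
  proof
    fix A assume AF: "A \<in> F"
    then have AI: "A \<in> Ind6" using F by auto
    have "Inr x \<in> A"
    proof (rule ccontr)
      assume nx: "Inr x \<notin> A"
      obtain D where D: "D \<subseteq> {..<n}" "x \<notin> D" "card D + r \<le> n" "(Inr ` {..<n} :: (nat + nat) set) \<inter> A \<subseteq> Inr ` D"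
      proof (cases rule: disjE[OF indcases[OF AI]])
        case 1
        then obtain S where S: "S \<subseteq> {..<n}" "card S = r" "A = Inr ` S" by blast
        show ?thesis by (rule that[of S]) (use S nx nr in auto)
      next
        case 2
        then obtain m P where P: "m < n" "P \<subseteq> {..<n}" "m \<notin> P" "card P = r - 1" "A = insert (Inl m) (Inr ` P)" by blast
        show ?thesis by (rule that[of P]) (use P nx nr in auto)
      qed
      obtain T where T: "T \<subseteq> {..<n}" "card T = r" "x \<in> T" "T \<inter> D = {}" using avoid_set[OF r1 x D(1,2,3)] by blast
      have "T \<in> H" using allx T by blast
      then have TF: "(Inr ` T :: (nat + nat) set) \<in> F" by (simp add: H_def)
      have "(Inr ` T :: (nat + nat) set) \<inter> A = {}"
      proof -
        have "(Inr ` T :: (nat + nat) set) \<inter> A \<subseteq> Inr ` T \<inter> (Inr ` {..<n} \<inter> A)" using T by auto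
        also have "\<dots> \<subseteq> Inr ` T \<inter> Inr ` D" using D(4) by auto
        also have "\<dots> = {}" using T(4) by (auto simp: image_Int[symmetric])
        finally show ?thesis by blast
      qed
      then show False using F(2)[unfolded intersecting_def, rule_format, OF TF AF] by blast
    qed
    then show "A \<in> St x" using AI by (simp add: indep_star_def)
  qed
  have "card (St x) \<le> card F"
    using max_ge[OF finInd[OF r2 nr] star_sub star_int] FF by simp
  moreover have "finite (St x)" by (rule finite_subset[OF star_sub finInd[OF r2 nr]])
  ultimately have "F = St x" using sub by (intro card_seteq) auto
  moreover have "Inr x \<in> pendant_V (K_V n)" using x by (simp add: Vdef)
  ultimately show "\<exists>v\<in>pendant_V (K_V n). F = indep_star (pendant_V (K_V n)) (pendant_E K_E) r v" by blast
qed

end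

lemma single_in: "v \<in> pendant_V (K_V n) \<Longrightarrow> {v} \<in> indep_rsets (pendant_V (K_V n)) (pendant_E K_E) 1"
  by (cases v) (auto simp: indep_rsets_def K_E_def)

lemma single_form: "A \<in> indep_rsets V E 1 \<Longrightarrow> \<exists>v\<in>V. A = {v}"
proof -
  assume "A \<in> indep_rsets V E 1"
  then have "A \<subseteq> V" "card A = Suc 0" by (auto simp: indep_rsets_def)
  then show ?thesis by (auto simp: card_1_singleton_iff)
qed

lemma star1: assumes "v \<in> pendant_V (K_V n)"
  shows "indep_star (pendant_V (K_V n)) (pendant_E K_E) 1 v = {{v}}"
proof
  show "indep_star (pendant_V (K_V n)) (pendant_E K_E) 1 v \<subseteq> {{v}}"
  proof
    fix A assume "A \<in> indep_star (pendant_V (K_V n)) (pendant_E K_E) 1 v"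
    then have "A \<in> indep_rsets (pendant_V (K_V n)) (pendant_E K_E) 1" "v \<in> A" by (auto simp: indep_star_def)
    then show "A \<in> {{v}}" using single_form by fastforce
  qed
  show "{{v}} \<subseteq> indep_star (pendant_V (K_V n)) (pendant_E K_E) 1 v"
    using single_in[OF assms] by (auto simp: indep_star_def)
qed

lemma le1: assumes "F \<subseteq> indep_rsets V E 1" "intersecting F" "finite F" shows "card F \<le> 1"
proof -
  have "\<forall>A\<in>F. \<forall>B\<in>F. A = B"
  proof (intro ballI)
    fix A B assume a: "A \<in> F" and b: "B \<in> F"
    obtain x where x: "A = {x}" using single_form assms(1) a by blast
    obtain y where y: "B = {y}" using single_form assms(1) b by blast
    have "A \<inter> B \<noteq> {}" using assms(2)[unfolded intersecting_def, rule_format, OF a b] .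
    then show "A = B" using x y by auto
  qed
  then show ?thesis using card_le_Suc0_iff_eq[OF assms(3)] by simp
qed

lemma r1_case: assumes n: "1 \<le> n"
  shows "r_EKR (pendant_V (K_V n)) (pendant_E K_E) 1 \<and> strictly_r_EKR (pendant_V (K_V n)) (pendant_E K_E) 1"
proof -
  have fin: "finite (indep_rsets (pendant_V (K_V n)) (pendant_E K_E) 1)" by (rule finite_Ind)
  have v0: "Inr 0 \<in> pendant_V (K_V n)" using n by (simp add: Vdef)
  have mx: "max_intersecting (pendant_V (K_V n)) (pendant_E K_E) 1 = card (indep_star (pendant_V (K_V n)) (pendant_E K_E) 1 (Inr 0))"
  proof (rule max_eqI'[OF fin star_sub star_int])
    fix F assume F: "F \<subseteq> indep_rsets (pendant_V (K_V n)) (pendant_E K_E) 1" "intersecting F"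
    have "finite F" by (rule finite_subset[OF F(1) fin])
    then show "card F \<le> card (indep_star (pendant_V (K_V n)) (pendant_E K_E) 1 (Inr 0))"
      using le1[OF F] star1[OF v0] by simp
  qed
  have mx1: "max_intersecting (pendant_V (K_V n)) (pendant_E K_E) 1 = 1" using mx star1[OF v0] by simp
  have ekr: "r_EKR (pendant_V (K_V n)) (pendant_E K_E) 1"
    unfolding r_EKR_def using mx v0 by (intro bexI[of _ "Inr 0"]) simp_all
  have "strictly_r_EKR (pendant_V (K_V n)) (pendant_E K_E) 1"
    unfolding strictly_r_EKR_def
  proof (intro conjI ekr allI impI)
    fix F assume F: "F \<subseteq> indep_rsets (pendant_V (K_V n)) (pendant_E K_E) 1 \<and> intersecting F \<and>
      card F = max_intersecting (pendant_V (K_V n)) (pendant_E K_E) 1"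
    then have "card F = 1" using mx1 by simp
    then obtain A where A: "F = {A}" by (auto simp: card_1_singleton_iff)
    then have "A \<in> indep_rsets (pendant_V (K_V n)) (pendant_E K_E) 1" using F by auto
    then obtain v where v: "v \<in> pendant_V (K_V n)" "A = {v}" using single_form by blast
    then have "F = indep_star (pendant_V (K_V n)) (pendant_E K_E) 1 v" using A star1[OF v(1)] by simp
    then show "\<exists>v\<in>pendant_V (K_V n). F = indep_star (pendant_V (K_V n)) (pendant_E K_E) 1 v" using v by blast
  qed
  then show ?thesis using ekr by simp
qed

theorem theorem4:
  fixes n r :: nat
  assumes "n \<ge> 1" and "r \<ge> 1"
  shows "(n \<ge> 2 * r \<longrightarrow> r_EKR (pendant_V (K_V n)) (pendant_E K_E) r)
       \<and> (n > 2 * r \<longrightarrow> strictly_r_EKR (pendant_V (K_V n)) (pendant_E K_E) r)"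
proof (cases "r = 1")
  case True
  then show ?thesis using r1_case[OF assms(1)] by simp
next
  case False
  then have r2: "2 \<le> r" using assms(2) by simp
  show ?thesis
  proof (intro conjI impI)
    assume "2 * r \<le> n"
    then show "r_EKR (pendant_V (K_V n)) (pendant_E K_E) r" by (rule rEKR2[OF r2])
  next
    assume h: "2 * r < n"
    then have "2 * r \<le> n" by simp
    then show "strictly_r_EKR (pendant_V (K_V n)) (pendant_E K_E) r" by (rule strict2[OF r2 _ h])
  qed
qed


end
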